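(* There exist universal constants $C,C_1>0$ such that the following holds. Let $Z_1,\dots,Z_n\in\mathbb R^{p\times r}$ be independent random matrices with i.i.d. $N(0,1)$ entries, and let $M_1,\dots,M_n\in\mathbb R^{p\times r}$ be fixed (deterministic) matrices. Then $$\mathbb P\left(\Big|\sum_{i=1}^n\|Z_i\|_{\rm F}^2\langle Z_i,M_i\rangle\Big|\ge Cpr\Big(\sum_{i=1}^n\|M_i\|_{\rm F}^2\Big)^{1/2}\sqrt{\log p}\right)\le p^{-C_1}.$$
   Context: $\langle A,B\rangle=\operatorname{tr}(A^\top B)$ is the trace inner product and $\|\cdot\|_{\rm F}$ the Frobenius norm. *)

theory Defs
  imports "HOL-Probability.Probability"
begin

text \<open>A p x r real matrix is represented as a function nat => nat => real,
  only the entries with row index < p and column index < r being relevant.\<close>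

definition frob_inner :: "nat \<Rightarrow> nat \<Rightarrow> (nat \<Rightarrow> nat \<Rightarrow> real) \<Rightarrow> (nat \<Rightarrow> nat \<Rightarrow> real) \<Rightarrow> real" where
  "frob_inner p r A B = (\<Sum>j<p. \<Sum>k<r. A j k * B j k)"

definition frob_norm :: "nat \<Rightarrow> nat \<Rightarrow> (nat \<Rightarrow> nat \<Rightarrow> real) \<Rightarrow> real" where
  "frob_norm p r A = sqrt (frob_inner p r A A)"

text \<open>Probability space carrying n independent p x r matrices with i.i.d. N(0,1)
  entries: the coordinate (i,j,k) of the sample is entry (j,k) of Z_i.\<close>

definition gauss_mats :: "nat \<Rightarrow> nat \<Rightarrow> nat \<Rightarrow> (nat \<times> nat \<times> nat \<Rightarrow> real) measure" where
  "gauss_mats n p r = PiM ({..<n} \<times> {..<p} \<times> {..<r}) (\<lambda>_. std_normal_distribution)"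

definition Zmat :: "(nat \<times> nat \<times> nat \<Rightarrow> real) \<Rightarrow> nat \<Rightarrow> nat \<Rightarrow> nat \<Rightarrow> real" where
  "Zmat \<omega> i = (\<lambda>j k. \<omega> (i, j, k))"

end

theory Submission
  imports Defs
begin

abbreviation "ND \<equiv> std_normal_distribution"

lemma ND_prob: "prob_space ND"
  using prob_space_normal_density[of 1 0] by simp

lemma ND_int_pow: "integrable ND (\<lambda>x. x ^ k)"
  by (rule integrable_std_normal_distribution_moment)

lemma ND_mom: "integral\<^sup>L ND (\<lambda>x. x ^ k) = (if even k then fact k / (2 ^ (k div 2) * fact (k div 2)) else 0)"
proof (cases "even k")
  case True
  then obtain j where k: "k = 2 * j" by blast
  show ?thesis using std_normal_distribution_even_moments(1)[of j] k by simp
next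
  case False
  then show ?thesis using integral_std_normal_distribution_moment_odd by simp
qed

lemma poly_step: "((x::real)\<^sup>2 - 1) ^ Suc i * x ^ j = (x\<^sup>2 - 1) ^ i * x ^ (j + 2) - (x\<^sup>2 - 1) ^ i * x ^ j"
proof -
    have "(x\<^sup>2 - 1) ^ Suc i * x ^ j = ((x\<^sup>2 - 1) ^ i * x ^ j) * (x\<^sup>2 - 1)" by (simp add: mult_ac)
    also have "\<dots> = ((x\<^sup>2 - 1) ^ i * x ^ j) * x\<^sup>2 - (x\<^sup>2 - 1) ^ i * x ^ j" by (simp add: right_diff_distrib)
    also have "\<dots> = (x\<^sup>2 - 1) ^ i * x ^ (j + 2) - (x\<^sup>2 - 1) ^ i * x ^ j" by (simp add: power_add mult_ac power2_eq_square)
    finally show ?thesis .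
qed

lemma ND_poly_int: "integrable ND (\<lambda>x. (x\<^sup>2 - 1) ^ i * x ^ j)"
proof (induction i arbitrary: j)
  case 0
  then show ?case using ND_int_pow by simp
next
  case (Suc i)
  have eq: "(\<lambda>x::real. (x\<^sup>2 - 1) ^ Suc i * x ^ j) = (\<lambda>x. (x\<^sup>2 - 1) ^ i * x ^ (j + 2) - (x\<^sup>2 - 1) ^ i * x ^ j)"
    by (rule ext) (rule poly_step)
  show ?case unfolding eq by (rule Bochner_Integration.integrable_diff[OF Suc.IH Suc.IH])
qed

lemma ND_poly_rec: "integral\<^sup>L ND (\<lambda>x. (x\<^sup>2 - 1) ^ Suc i * x ^ j)
   = integral\<^sup>L ND (\<lambda>x. (x\<^sup>2 - 1) ^ i * x ^ (j + 2)) - integral\<^sup>L ND (\<lambda>x. (x\<^sup>2 - 1) ^ i * x ^ j)"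
proof -
  have eq: "(\<lambda>x::real. (x\<^sup>2 - 1) ^ Suc i * x ^ j) = (\<lambda>x. (x\<^sup>2 - 1) ^ i * x ^ (j + 2) - (x\<^sup>2 - 1) ^ i * x ^ j)"
    by (rule ext) (rule poly_step)
  show ?thesis unfolding eq by (intro Bochner_Integration.integral_diff ND_poly_int)
qed

lemma ND_poly0: "integral\<^sup>L ND (\<lambda>x. (x\<^sup>2 - 1) ^ 0 * x ^ j) = integral\<^sup>L ND (\<lambda>x. x ^ j)"
  by simp

definition mom :: "nat \<Rightarrow> nat \<Rightarrow> real" where
  "mom i j = integral\<^sup>L ND (\<lambda>x. (x\<^sup>2 - 1) ^ i * x ^ j)"

lemma mom_Suc: "mom (Suc i) j = mom i (j + 2) - mom i j"
  unfolding mom_def by (rule ND_poly_rec)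

lemma mom_0: "mom 0 j = (if even j then fact j / (2 ^ (j div 2) * fact (j div 2)) else 0)"
  unfolding mom_def using ND_mom by simp

lemma mom_vals:
  "mom 0 0 = 1" "mom 0 1 = 0" "mom 0 2 = 1"
  "mom 1 0 = 0" "mom 1 1 = 0" "mom 1 2 = 2"
  "mom 2 0 = 2" "mom 2 1 = 0" "mom 2 2 = 10"
proof -
  have m1: "mom 1 j = mom 0 (j + 2) - mom 0 j" for j using mom_Suc[of 0 j] by simp
  have m2: "mom 2 j = mom 1 (j + 2) - mom 1 j" for j using mom_Suc[of 1 j] by (simp add: numeral_2_eq_2)
  have z: "mom 0 0 = 1" "mom 0 1 = 0" "mom 0 2 = 1" "mom 0 3 = 0" "mom 0 4 = 3" "mom 0 5 = 0" "mom 0 6 = 15"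
    by (simp_all add: mom_0 fact_numeral)
  have o: "mom 1 0 = 0" "mom 1 1 = 0" "mom 1 2 = 2" "mom 1 3 = 0" "mom 1 4 = 12"
    using m1[of 0] m1[of 1] m1[of 2] m1[of 3] m1[of 4] z by (simp_all add: eval_nat_numeral)
  show "mom 0 0 = 1" "mom 0 1 = 0" "mom 0 2 = 1"
  "mom 1 0 = 0" "mom 1 1 = 0" "mom 1 2 = 2"
  "mom 2 0 = 2" "mom 2 1 = 0" "mom 2 2 = 10"
    using z o m2[of 0] m2[of 1] m2[of 2] by (simp_all add: eval_nat_numeral)
qed

lemma ND_mgf: "integral\<^sup>L ND (\<lambda>x. exp (t * x)) = exp (t\<^sup>2 / 2)"
proof -
  have eq: "\<And>x. std_normal_density x * exp (t * x) = exp (t\<^sup>2 / 2) * normal_density t 1 x"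
    by (simp add: normal_density_def mult_exp_exp power2_eq_square field_simps)
  have "integral\<^sup>L ND (\<lambda>x. exp (t * x)) = integral\<^sup>L lborel (\<lambda>x. std_normal_density x * exp (t * x))"
    by (subst integral_density) (auto simp: normal_density_nonneg)
  also have "\<dots> = exp (t\<^sup>2 / 2)" unfolding eq by simp
  finally show ?thesis .
qed

lemma ND_mgf_int: "integrable ND (\<lambda>x. exp (t * x))"
proof -
  have eq: "\<And>x. std_normal_density x * exp (t * x) = exp (t\<^sup>2 / 2) * normal_density t 1 x"
    by (simp add: normal_density_def mult_exp_exp power2_eq_square field_simps)
  show ?thesis
    by (subst integrable_density) (auto simp: normal_density_nonneg eq)
qed


lemma PiND_prob: "prob_space (PiM I (\<lambda>_. ND))"
proof -
  interpret product_prob_space "\<lambda>_. ND" by (simp add: product_prob_space_def product_prob_space_axioms_def ND_prob product_sigma_finite_def prob_space_imp_sigma_finite)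
  show ?thesis by (rule prob_space_PiM) (simp add: ND_prob)
qed

lemma PiND_prod:
  fixes I :: "'i set" and f :: "'i \<Rightarrow> real \<Rightarrow> real"
  assumes "finite I" "\<And>l. l \<in> I \<Longrightarrow> integrable ND (f l)"
  shows "integral\<^sup>L (PiM I (\<lambda>_. ND)) (\<lambda>\<omega>. \<Prod>l\<in>I. f l (\<omega> l)) = (\<Prod>l\<in>I. integral\<^sup>L ND (f l))"
    and "integrable (PiM I (\<lambda>_. ND)) (\<lambda>\<omega>. \<Prod>l\<in>I. f l (\<omega> l))"
proof -
  interpret product_prob_space "(\<lambda>_. ND) :: 'i \<Rightarrow> real measure" by (simp add: product_prob_space_def product_prob_space_axioms_def ND_prob product_sigma_finite_def prob_space_imp_sigma_finite)
  show "integral\<^sup>L (PiM I (\<lambda>_. ND)) (\<lambda>\<omega>. \<Prod>l\<in>I. f l (\<omega> l)) = (\<Prod>l\<in>I. integral\<^sup>L ND (f l))"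
    by (rule product_integral_prod[OF assms])
  show "integrable (PiM I (\<lambda>_. ND)) (\<lambda>\<omega>. \<Prod>l\<in>I. f l (\<omega> l))"
    by (rule product_integrable_prod[OF assms])
qed

lemma prod_delta_pow:
  assumes "finite I" "a \<in> I"
  shows "(\<Prod>l\<in>I. (g l :: real) ^ (if l = a then 1 else 0)) = g a"
proof -
  have "(\<Prod>l\<in>I. (g l :: real) ^ (if l = a then 1 else 0)) = (\<Prod>l\<in>I. if l = a then g l else 1)"
    by (rule prod.cong) auto
  then show ?thesis using assms by (simp add: prod.delta)
qed

lemma orth:
  assumes fin: "finite I" and I: "a \<in> I" "b \<in> I" "a' \<in> I" "b' \<in> I"
  shows "integral\<^sup>L (PiM I (\<lambda>_. ND)) (\<lambda>\<omega>. ((\<omega> a)\<^sup>2 - 1) * \<omega> b * (((\<omega> a')\<^sup>2 - 1) * \<omega> b'))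
     = (if a = a' \<and> b = b' then (if a = b then 10 else 2) else 0)"
    and "integrable (PiM I (\<lambda>_. ND)) (\<lambda>\<omega>. ((\<omega> a)\<^sup>2 - 1) * \<omega> b * (((\<omega> a')\<^sup>2 - 1) * \<omega> b'))"
proof -
  define na where "na l = (if l = a then 1 else 0) + (if l = a' then 1 else (0::nat))" for l
  define nb where "nb l = (if l = b then 1 else 0) + (if l = b' then 1 else (0::nat))" for l
  have pw: "((\<omega> a)\<^sup>2 - 1) * \<omega> b * (((\<omega> a')\<^sup>2 - 1) * \<omega> b') = (\<Prod>l\<in>I. ((\<omega> l)\<^sup>2 - 1) ^ na l * \<omega> l ^ nb l)"
    for \<omega> :: "_ \<Rightarrow> real"
  proof -
    have "(\<Prod>l\<in>I. ((\<omega> l)\<^sup>2 - 1) ^ na l * \<omega> l ^ nb l)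
      = (\<Prod>l\<in>I. ((\<omega> l)\<^sup>2 - 1) ^ (if l = a then 1 else 0)) * (\<Prod>l\<in>I. ((\<omega> l)\<^sup>2 - 1) ^ (if l = a' then 1 else 0))
        * ((\<Prod>l\<in>I. \<omega> l ^ (if l = b then 1 else 0)) * (\<Prod>l\<in>I. \<omega> l ^ (if l = b' then 1 else 0)))"
      unfolding na_def nb_def power_add prod.distrib by simp
    also have "\<dots> = ((\<omega> a)\<^sup>2 - 1) * ((\<omega> a')\<^sup>2 - 1) * (\<omega> b * \<omega> b')"
      using fin I by (simp only: prod_delta_pow)
    finally show ?thesis by (simp add: mult_ac)
  qed
  have int: "\<And>l. l \<in> I \<Longrightarrow> integrable ND (\<lambda>x. (x\<^sup>2 - 1) ^ na l * x ^ nb l)"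
    by (rule ND_poly_int)
  have E: "integral\<^sup>L (PiM I (\<lambda>_. ND)) (\<lambda>\<omega>. ((\<omega> a)\<^sup>2 - 1) * \<omega> b * (((\<omega> a')\<^sup>2 - 1) * \<omega> b'))
     = (\<Prod>l\<in>I. mom (na l) (nb l))"
    unfolding pw mom_def using PiND_prod(1)[OF fin int] by simp
  show "integrable (PiM I (\<lambda>_. ND)) (\<lambda>\<omega>. ((\<omega> a)\<^sup>2 - 1) * \<omega> b * (((\<omega> a')\<^sup>2 - 1) * \<omega> b'))"
    unfolding pw using PiND_prod(2)[OF fin int] by simp
  show "integral\<^sup>L (PiM I (\<lambda>_. ND)) (\<lambda>\<omega>. ((\<omega> a)\<^sup>2 - 1) * \<omega> b * (((\<omega> a')\<^sup>2 - 1) * \<omega> b'))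
     = (if a = a' \<and> b = b' then (if a = b then 10 else 2) else 0)"
  proof (cases "b = b'")
    case False
    have "mom (na b) (nb b) = 0"
      using False mom_vals unfolding na_def nb_def by (auto simp: eval_nat_numeral)
    then show ?thesis unfolding E using False fin I by (auto simp: prod_zero_iff)
  next
    case bb: True
    show ?thesis
    proof (cases "a = a'")
      case False
      have "\<exists>l\<in>I. mom (na l) (nb l) = 0"
      proof (cases "a = b")
        case True
        then have "mom (na a') (nb a') = 0"
          using False bb mom_vals unfolding na_def nb_def by (auto simp: eval_nat_numeral)
        then show ?thesis using I by blast
      next
        case ab: False
        then have "mom (na a) (nb a) = 0"
          using False bb mom_vals unfolding na_def nb_def by (auto simp: eval_nat_numeral)
        then show ?thesis using I by blast
      qed
      then show ?thesis unfolding E using False fin by (auto simp: prod_zero_iff)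
    next
      case aa: True
      have "mom (na l) (nb l) = (if l = a then (if a = b then 10 else 2) else 1)" for l
        using aa bb mom_vals unfolding na_def nb_def by (auto simp: eval_nat_numeral)
      then show ?thesis unfolding E using aa bb fin I by (simp add: prod.delta)
    qed
  qed
qed


lemma gauss_tail:
  fixes I :: "'i set" and c :: "'i \<Rightarrow> real"
  assumes fin: "finite I" and m2: "(\<Sum>l\<in>I. (c l)\<^sup>2) > 0" and s: "s > 0"
  shows "measure (PiM I (\<lambda>_. ND)) {\<omega> \<in> space (PiM I (\<lambda>_. ND)). (\<Sum>l\<in>I. c l * \<omega> l) \<ge> s}
     \<le> exp (- s\<^sup>2 / (2 * (\<Sum>l\<in>I. (c l)\<^sup>2)))"
proof -
  define M where "M = PiM I (\<lambda>_. ND)"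
  define m where "m = (\<Sum>l\<in>I. (c l)\<^sup>2)"
  define t where "t = s / m"
  have t: "t > 0" using s m2 unfolding t_def m_def by simp
  define f where "f l x = exp ((t * c l) * x)" for l x
  have pw: "exp (t * (\<Sum>l\<in>I. c l * \<omega> l)) = (\<Prod>l\<in>I. f l (\<omega> l))" for \<omega> :: "'i \<Rightarrow> real"
    using fin unfolding f_def by (simp add: sum_distrib_left exp_sum mult.assoc)
  have int1: "\<And>l. l \<in> I \<Longrightarrow> integrable ND (f l)"
    unfolding f_def using ND_mgf_int by simp
  have Eexp: "integral\<^sup>L M (\<lambda>\<omega>. exp (t * (\<Sum>l\<in>I. c l * \<omega> l))) = exp (t\<^sup>2 * m / 2)"
  proof -
    have "integral\<^sup>L M (\<lambda>\<omega>. exp (t * (\<Sum>l\<in>I. c l * \<omega> l))) = (\<Prod>l\<in>I. exp ((t * c l)\<^sup>2 / 2))"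
    proof -
      have "integral\<^sup>L M (\<lambda>\<omega>. exp (t * (\<Sum>l\<in>I. c l * \<omega> l))) = integral\<^sup>L M (\<lambda>\<omega>. \<Prod>l\<in>I. f l (\<omega> l))"
        unfolding pw ..
      also have "\<dots> = (\<Prod>l\<in>I. integral\<^sup>L ND (f l))" unfolding M_def by (rule PiND_prod(1)[OF fin int1])
      also have "\<dots> = (\<Prod>l\<in>I. exp ((t * c l)\<^sup>2 / 2))" unfolding f_def by (simp add: ND_mgf)
      finally show ?thesis .
    qed
    also have "\<dots> = exp (\<Sum>l\<in>I. (t * c l)\<^sup>2 / 2)" using fin by (simp add: exp_sum)
    also have "(\<Sum>l\<in>I. (t * c l)\<^sup>2 / 2) = t\<^sup>2 * m / 2"
      unfolding m_def by (simp add: power_mult_distrib sum_distrib_left sum_divide_distrib)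
    finally show ?thesis .
  qed
  have intE: "integrable M (\<lambda>\<omega>. exp (t * (\<Sum>l\<in>I. c l * \<omega> l)))"
    unfolding pw M_def by (rule PiND_prod(2)[OF fin int1])
  have seteq: "{\<omega> \<in> space M. (\<Sum>l\<in>I. c l * \<omega> l) \<ge> s} = {\<omega> \<in> space M. exp (t * (\<Sum>l\<in>I. c l * \<omega> l)) \<ge> exp (t * s)}"
    using t by auto
  have "measure M {\<omega> \<in> space M. exp (t * (\<Sum>l\<in>I. c l * \<omega> l)) \<ge> exp (t * s)}
     \<le> integral\<^sup>L M (\<lambda>\<omega>. exp (t * (\<Sum>l\<in>I. c l * \<omega> l))) / exp (t * s)"
    by (rule integral_Markov_inequality_measure[OF intE, where A="{}"]) auto
  also have "\<dots> = exp (t\<^sup>2 * m / 2 - t * s)" unfolding Eexp by (simp add: exp_diff)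
  also have "t\<^sup>2 * m / 2 - t * s = - s\<^sup>2 / (2 * m)"
    using m2 unfolding t_def m_def by (simp add: field_simps power2_eq_square)
  finally show ?thesis unfolding M_def m_def seteq[unfolded M_def] .
qed

lemma T_second:
  fixes I :: "'i set" and w :: "'i \<times> 'i \<Rightarrow> real"
  assumes fin: "finite I"
  defines "T \<equiv> (\<lambda>\<omega>. \<Sum>q\<in>I \<times> I. w q * (((\<omega> (fst q))\<^sup>2 - 1) * \<omega> (snd q)))"
  shows "integrable (PiM I (\<lambda>_. ND)) (\<lambda>\<omega>. (T \<omega>)\<^sup>2)"
    and "integral\<^sup>L (PiM I (\<lambda>_. ND)) (\<lambda>\<omega>. (T \<omega>)\<^sup>2) \<le> 10 * (\<Sum>q\<in>I \<times> I. (w q)\<^sup>2)"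
proof -
  define M where "M = PiM I (\<lambda>_. ND)"
  define u where "u q \<omega> = (((\<omega> (fst q))\<^sup>2 - 1) * \<omega> (snd q))" for q and \<omega> :: "'i \<Rightarrow> real"
  have finQ: "finite (I \<times> I)" using fin by simp
  have sq: "(T \<omega>)\<^sup>2 = (\<Sum>q\<in>I \<times> I. \<Sum>q'\<in>I \<times> I. w q * w q' * (u q \<omega> * u q' \<omega>))" for \<omega>
    unfolding T_def u_def power2_eq_square sum_product by (simp add: mult_ac)
  have intq: "integrable M (\<lambda>\<omega>. w q * w q' * (u q \<omega> * u q' \<omega>))" if "q \<in> I \<times> I" "q' \<in> I \<times> I" for q q'
    using orth(2)[OF fin, of "fst q" "snd q" "fst q'" "snd q'"] that unfolding M_def u_def
    by (auto simp: mult.assoc)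
  have Eq: "integral\<^sup>L M (\<lambda>\<omega>. w q * w q' * (u q \<omega> * u q' \<omega>)) = w q * w q' * (if q = q' then (if fst q = snd q then 10 else 2) else 0)"
    if "q \<in> I \<times> I" "q' \<in> I \<times> I" for q q'
    using orth(1)[OF fin, of "fst q" "snd q" "fst q'" "snd q'"] that unfolding M_def u_def
    by (auto simp: prod_eq_iff)
  show "integrable (PiM I (\<lambda>_. ND)) (\<lambda>\<omega>. (T \<omega>)\<^sup>2)"
    unfolding sq M_def[symmetric] using intq by (intro Bochner_Integration.integrable_sum) auto
  have "integral\<^sup>L M (\<lambda>\<omega>. (T \<omega>)\<^sup>2) = (\<Sum>q\<in>I \<times> I. \<Sum>q'\<in>I \<times> I. integral\<^sup>L M (\<lambda>\<omega>. w q * w q' * (u q \<omega> * u q' \<omega>)))"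
    unfolding sq using intq by (simp add: Bochner_Integration.integral_sum Bochner_Integration.integrable_sum)
  also have "\<dots> = (\<Sum>q\<in>I \<times> I. \<Sum>q'\<in>I \<times> I. w q * w q' * (if q = q' then (if fst q = snd q then 10 else 2) else 0))"
    using Eq by (intro sum.cong) auto
  also have "\<dots> = (\<Sum>q\<in>I \<times> I. (w q)\<^sup>2 * (if fst q = snd q then 10 else 2))"
  proof (rule sum.cong[OF refl])
    fix q assume q: "q \<in> I \<times> I"
    define e :: real where "e = (if fst q = snd q then 10 else 2)"
    have "(\<Sum>q'\<in>I \<times> I. w q * w q' * (if q = q' then (if fst q = snd q then 10 else 2) else 0))
        = (\<Sum>q'\<in>I \<times> I. if q' = q then w q * w q * e else 0)"
      unfolding e_def by (rule sum.cong) auto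
    also have "\<dots> = (w q)\<^sup>2 * e" using finQ q by (simp add: sum.delta power2_eq_square)
    finally show "(\<Sum>q'\<in>I \<times> I. w q * w q' * (if q = q' then (if fst q = snd q then 10 else 2) else 0))
        = (w q)\<^sup>2 * (if fst q = snd q then 10 else 2)" unfolding e_def .
  qed
  also have "\<dots> \<le> (\<Sum>q\<in>I \<times> I. 10 * (w q)\<^sup>2)"
    by (intro sum_mono) auto
  finally show "integral\<^sup>L (PiM I (\<lambda>_. ND)) (\<lambda>\<omega>. (T \<omega>)\<^sup>2) \<le> 10 * (\<Sum>q\<in>I \<times> I. (w q)\<^sup>2)"
    unfolding M_def by (simp add: sum_distrib_left)
qed


lemma frob_sq: "(frob_norm p r A)\<^sup>2 = (\<Sum>j<p. \<Sum>k<r. (A j k)\<^sup>2)"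
  unfolding frob_norm_def frob_inner_def
  by (subst real_sqrt_pow2) (auto intro!: sum_nonneg simp: power2_eq_square)

lemma ident:
  fixes n p r :: nat and \<omega> :: "nat \<times> nat \<times> nat \<Rightarrow> real" and M :: "nat \<Rightarrow> nat \<Rightarrow> nat \<Rightarrow> real"
  defines "I \<equiv> {..<n} \<times> {..<p} \<times> {..<r}"
  defines "c \<equiv> (\<lambda>l. M (fst l) (fst (snd l)) (snd (snd l)))"
  defines "w \<equiv> (\<lambda>q. if fst (fst q) = fst (snd q) then c (snd q) else 0)"
  shows "(\<Sum>i<n. (frob_norm p r (Zmat \<omega> i))\<^sup>2 * frob_inner p r (Zmat \<omega> i) (M i))
     = real p * real r * (\<Sum>l\<in>I. c l * \<omega> l)
       + (\<Sum>q\<in>I \<times> I. w q * (((\<omega> (fst q))\<^sup>2 - 1) * \<omega> (snd q)))"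
proof -
  define B where "B = {..<p} \<times> {..<r}"
  have finB: "finite B" unfolding B_def by simp
  have cardB: "card B = p * r" unfolding B_def by (simp add: card_cartesian_product)
  have I: "I = {..<n} \<times> B" unfolding I_def B_def ..
  define X where "X i = (\<Sum>b\<in>B. c (i, b) * \<omega> (i, b))" for i
  define W where "W i = (\<Sum>b\<in>B. (\<omega> (i, b))\<^sup>2 - 1)" for i
  have hX: "frob_inner p r (Zmat \<omega> i) (M i) = X i" for i
    unfolding frob_inner_def Zmat_def X_def B_def c_def
    by (auto simp: sum.cartesian_product mult.commute intro!: sum.cong)
  have hN: "(frob_norm p r (Zmat \<omega> i))\<^sup>2 = real p * real r + W i" for i
  proof -
    have "(frob_norm p r (Zmat \<omega> i))\<^sup>2 = (\<Sum>b\<in>B. (\<omega> (i, b))\<^sup>2)"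
      unfolding frob_sq Zmat_def B_def by (simp add: sum.cartesian_product)
    also have "\<dots> = (\<Sum>b\<in>B. ((\<omega> (i, b))\<^sup>2 - 1)) + real (card B)"
      by (simp add: sum_subtractf)
    finally show ?thesis unfolding W_def cardB by simp
  qed
  have LHS: "(\<Sum>i<n. (frob_norm p r (Zmat \<omega> i))\<^sup>2 * frob_inner p r (Zmat \<omega> i) (M i))
      = real p * real r * (\<Sum>i<n. X i) + (\<Sum>i<n. W i * X i)"
    unfolding hX hN by (simp add: algebra_simps sum.distrib sum_distrib_left)
  have G: "(\<Sum>i<n. X i) = (\<Sum>l\<in>I. c l * \<omega> l)"
    unfolding X_def I by (simp add: sum.cartesian_product)
  have inner: "(\<Sum>a'\<in>I. w (a, a') * \<omega> a') = X (fst a)" if "a \<in> I" for a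
  proof -
    have "(\<Sum>a'\<in>I. w (a, a') * \<omega> a') = (\<Sum>i<n. \<Sum>b\<in>B. w (a, (i, b)) * \<omega> (i, b))"
      unfolding I by (simp add: sum.cartesian_product)
    also have "\<dots> = (\<Sum>i<n. if i = fst a then X i else 0)"
      unfolding w_def X_def by (rule sum.cong) auto
    also have "\<dots> = X (fst a)" using that unfolding I by (auto simp: mem_Times_iff)
    finally show ?thesis .
  qed
  have "(\<Sum>q\<in>I \<times> I. w q * (((\<omega> (fst q))\<^sup>2 - 1) * \<omega> (snd q)))
      = (\<Sum>a\<in>I. ((\<omega> a)\<^sup>2 - 1) * (\<Sum>a'\<in>I. w (a, a') * \<omega> a'))"
    by (auto simp: sum.cartesian_product sum_distrib_left mult_ac intro!: sum.cong)
  also have "\<dots> = (\<Sum>a\<in>I. ((\<omega> a)\<^sup>2 - 1) * X (fst a))"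
    using inner by (intro sum.cong) auto
  also have "\<dots> = (\<Sum>i<n. W i * X i)"
    unfolding I W_def by (auto simp: sum.cartesian_product sum_distrib_right intro!: sum.cong)
  finally show ?thesis unfolding LHS G by simp
qed

lemma wsum:
  fixes n p r :: nat and M :: "nat \<Rightarrow> nat \<Rightarrow> nat \<Rightarrow> real"
  defines "I \<equiv> {..<n} \<times> {..<p} \<times> {..<r}"
  defines "c \<equiv> (\<lambda>l. M (fst l) (fst (snd l)) (snd (snd l)))"
  defines "w \<equiv> (\<lambda>q. if fst (fst q) = fst (snd q) then c (snd q) else 0)"
  shows "(\<Sum>q\<in>I \<times> I. (w q)\<^sup>2) = real p * real r * (\<Sum>l\<in>I. (c l)\<^sup>2)"
    and "(\<Sum>l\<in>I. (c l)\<^sup>2) = (\<Sum>i<n. (frob_norm p r (M i))\<^sup>2)"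
proof -
  define B where "B = {..<p} \<times> {..<r}"
  have cardB: "card B = p * r" unfolding B_def by (simp add: card_cartesian_product)
  have I: "I = {..<n} \<times> B" unfolding I_def B_def ..
  have "(\<Sum>q\<in>I \<times> I. (w q)\<^sup>2) = (\<Sum>a\<in>I. \<Sum>a'\<in>I. (w (a, a'))\<^sup>2)"
    by (simp add: sum.cartesian_product)
  also have "\<dots> = (\<Sum>a'\<in>I. \<Sum>a\<in>I. (w (a, a'))\<^sup>2)"
    by (rule sum.swap)
  also have "\<dots> = (\<Sum>a'\<in>I. real p * real r * (c a')\<^sup>2)"
  proof (rule sum.cong[OF refl])
    fix a' assume a': "a' \<in> I"
    have "(\<Sum>a\<in>I. (w (a, a'))\<^sup>2) = (\<Sum>i<n. \<Sum>b\<in>B. (w ((i, b), a'))\<^sup>2)"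
      unfolding I by (simp add: sum.cartesian_product)
    also have "\<dots> = (\<Sum>i<n. if i = fst a' then real (card B) * (c a')\<^sup>2 else 0)"
      unfolding w_def by (rule sum.cong) auto
    also have "\<dots> = real p * real r * (c a')\<^sup>2" using a' unfolding I cardB by (auto simp: mem_Times_iff)
    finally show "(\<Sum>a\<in>I. (w (a, a'))\<^sup>2) = real p * real r * (c a')\<^sup>2" .
  qed
  also have "\<dots> = real p * real r * (\<Sum>l\<in>I. (c l)\<^sup>2)" by (simp add: sum_distrib_left)
  finally show "(\<Sum>q\<in>I \<times> I. (w q)\<^sup>2) = real p * real r * (\<Sum>l\<in>I. (c l)\<^sup>2)" .
  show "(\<Sum>l\<in>I. (c l)\<^sup>2) = (\<Sum>i<n. (frob_norm p r (M i))\<^sup>2)"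
    unfolding frob_sq I_def c_def by (auto simp: sum.cartesian_product intro!: sum.cong)
qed


lemma main_bound:
  fixes n p r :: nat and M :: "nat \<Rightarrow> nat \<Rightarrow> nat \<Rightarrow> real"
  assumes p: "p \<ge> 1" and r: "r \<ge> 1" and nz: "\<exists>i<n. frob_norm p r (M i) \<noteq> 0"
  shows "measure (gauss_mats n p r)
        {\<omega> \<in> space (gauss_mats n p r).
           \<bar>\<Sum>i<n. (frob_norm p r (Zmat \<omega> i))\<^sup>2 * frob_inner p r (Zmat \<omega> i) (M i)\<bar>
             \<ge> 16 * real p * real r * sqrt (\<Sum>i<n. (frob_norm p r (M i))\<^sup>2) * sqrt (ln (real p))}
      \<le> real p powr (- 1)"
proof -
  define I where "I = {..<n} \<times> {..<p} \<times> {..<r}"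
  define c where "c = (\<lambda>l. M (fst l) (fst (snd l)) (snd (snd l)))"
  define w where "w = (\<lambda>q::(nat \<times> nat \<times> nat) \<times> (nat \<times> nat \<times> nat). if fst (fst q) = fst (snd q) then c (snd q) else 0)"
  define P where "P = gauss_mats n p r"
  define m2 where "m2 = (\<Sum>l\<in>I. (c l)\<^sup>2)"
  define N where "N = real p * real r"
  define L where "L = ln (real p)"
  define G where "G \<omega> = (\<Sum>l\<in>I. c l * \<omega> l)" for \<omega> :: "nat \<times> nat \<times> nat \<Rightarrow> real"
  define T where "T \<omega> = (\<Sum>q\<in>I \<times> I. w q * (((\<omega> (fst q))\<^sup>2 - 1) * \<omega> (snd q)))" for \<omega> :: "nat \<times> nat \<times> nat \<Rightarrow> real"
  define S where "S \<omega> = (\<Sum>i<n. (frob_norm p r (Zmat \<omega> i))\<^sup>2 * frob_inner p r (Zmat \<omega> i) (M i))" for \<omega>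
  have finI: "finite I" unfolding I_def by simp
  have P: "P = PiM I (\<lambda>_. ND)" unfolding P_def gauss_mats_def I_def ..
  interpret prob_space P unfolding P by (rule PiND_prob)
  have m2eq: "(\<Sum>i<n. (frob_norm p r (M i))\<^sup>2) = m2"
    unfolding m2_def I_def c_def using wsum(2) by metis
  have SE: "S \<omega> = N * G \<omega> + T \<omega>" for \<omega>
    unfolding S_def N_def G_def T_def I_def w_def c_def by (rule ident)
  show ?thesis
  proof (cases "p = 1")
    case True
    then show ?thesis using prob_le_1 unfolding P_def by simp
  next
    case False
    with p have p2: "real p \<ge> 2" by simp
    have L: "L \<ge> 1 / 2"
    proof -
      have "ln (1 / real p) \<le> 1 / real p - 1" using p2 by (intro ln_le_minus_one) simp
      then have "ln (real p) \<ge> 1 - 1 / real p" using p2 by (simp add: ln_div)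
      moreover have "1 / real p \<le> 1 / 2" using p2 by simp
      ultimately show ?thesis unfolding L_def by linarith
    qed
    have m2pos: "m2 > 0"
    proof -
      obtain i where i: "i < n" "frob_norm p r (M i) \<noteq> 0" using nz by blast
      have "0 < (frob_norm p r (M i))\<^sup>2" using i by simp
      also have "\<dots> \<le> (\<Sum>i<n. (frob_norm p r (M i))\<^sup>2)"
        using i by (intro member_le_sum) auto
      finally show ?thesis using m2eq by simp
    qed
    have Npos: "N \<ge> real p" unfolding N_def using r p by simp
    define s where "s = 8 * sqrt m2 * sqrt L"
    have spos: "s > 0" unfolding s_def using m2pos L by simp
    define \<tau> where "\<tau> = 8 * N * sqrt m2 * sqrt L"
    have taupos: "\<tau> > 0" unfolding \<tau>_def using m2pos L Npos p2 by simp
    define A1 where "A1 = {\<omega> \<in> space P. G \<omega> \<ge> s}"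
    define A2 where "A2 = {\<omega> \<in> space P. (\<Sum>l\<in>I. (- c l) * \<omega> l) \<ge> s}"
    define A3 where "A3 = {\<omega> \<in> space P. \<bar>T \<omega>\<bar> \<ge> \<tau>}"
    have meas_comp: "(\<lambda>\<omega>. \<omega> l) \<in> borel_measurable P" if "l \<in> I" for l
      unfolding P using that by measurable
    have measG: "G \<in> borel_measurable P" unfolding G_def using meas_comp by measurable
    have measG2: "(\<lambda>\<omega>. \<Sum>l\<in>I. (- c l) * \<omega> l) \<in> borel_measurable P" using meas_comp by measurable
    have measT: "T \<in> borel_measurable P" unfolding T_def using meas_comp by (measurable; auto simp: mem_Times_iff)
    have A1s: "A1 \<in> sets P" unfolding A1_def using measG by measurable
    have A2s: "A2 \<in> sets P" unfolding A2_def using measG2 by measurable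
    have A3s: "A3 \<in> sets P" unfolding A3_def using measT by measurable
    have sub: "{\<omega> \<in> space P. \<bar>S \<omega>\<bar> \<ge> 16 * real p * real r * sqrt m2 * sqrt L} \<subseteq> A1 \<union> A2 \<union> A3"
    proof
      fix \<omega> assume \<omega>: "\<omega> \<in> {\<omega> \<in> space P. \<bar>S \<omega>\<bar> \<ge> 16 * real p * real r * sqrt m2 * sqrt L}"
      show "\<omega> \<in> A1 \<union> A2 \<union> A3"
      proof (rule ccontr)
        assume "\<omega> \<notin> A1 \<union> A2 \<union> A3"
        then have g1: "G \<omega> < s" and g2: "(\<Sum>l\<in>I. (- c l) * \<omega> l) < s" and t: "\<bar>T \<omega>\<bar> < \<tau>"
          using \<omega> unfolding A1_def A2_def A3_def by auto
        have "(\<Sum>l\<in>I. (- c l) * \<omega> l) = - G \<omega>" unfolding G_def by (simp add: sum_negf)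
        then have "\<bar>G \<omega>\<bar> < s" using g1 g2 by linarith
        then have "\<bar>N * G \<omega>\<bar> \<le> N * s" using Npos p2
          by (simp add: abs_mult mult_left_mono)
        moreover have "N * s = \<tau>" unfolding s_def \<tau>_def by simp
        ultimately have "\<bar>S \<omega>\<bar> < 2 * \<tau>" unfolding SE using t by linarith
        moreover have "2 * \<tau> = 16 * real p * real r * sqrt m2 * sqrt L" unfolding \<tau>_def N_def by simp
        ultimately show False using \<omega> by simp
      qed
    qed
    have b1: "measure P A1 \<le> exp (- (32 * L))"
    proof -
      have "measure P A1 \<le> exp (- s\<^sup>2 / (2 * m2))"
        unfolding A1_def P G_def m2_def using gauss_tail[OF finI _ spos] m2pos unfolding m2_def by simp
      also have "- s\<^sup>2 / (2 * m2) = - (32 * L)"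
        unfolding s_def using m2pos L by (simp add: power_mult_distrib)
      finally show ?thesis .
    qed
    have b2: "measure P A2 \<le> exp (- (32 * L))"
    proof -
      have "measure P A2 \<le> exp (- s\<^sup>2 / (2 * m2))"
        unfolding A2_def P m2_def using gauss_tail[OF finI _ spos, of "\<lambda>l. - c l"] m2pos unfolding m2_def by simp
      also have "- s\<^sup>2 / (2 * m2) = - (32 * L)"
        unfolding s_def using m2pos L by (simp add: power_mult_distrib)
      finally show ?thesis .
    qed
    have b3: "measure P A3 \<le> 10 / (64 * N * L)"
    proof -
      have "measure P A3 \<le> integral\<^sup>L P (\<lambda>\<omega>. (T \<omega>)\<^sup>2) / \<tau>\<^sup>2"
        unfolding A3_def
        by (rule second_moment_method[OF measT _ taupos]) (unfold P T_def, rule T_second(1)[OF finI])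
      also have "\<dots> \<le> (10 * (N * m2)) / \<tau>\<^sup>2"
      proof (rule divide_right_mono)
        show "integral\<^sup>L P (\<lambda>\<omega>. (T \<omega>)\<^sup>2) \<le> 10 * (N * m2)"
          using T_second(2)[OF finI, of w] wsum(1)[where n=n and p=p and r=r and M=M] unfolding P T_def N_def m2_def I_def w_def c_def
          by simp
      qed simp
      also have "\<dots> = 10 / (64 * N * L)"
        unfolding \<tau>_def using m2pos L Npos p2 by (simp add: power_mult_distrib power2_eq_square field_simps)
      finally show ?thesis .
    qed
    have "measure P {\<omega> \<in> space P. \<bar>S \<omega>\<bar> \<ge> 16 * real p * real r * sqrt m2 * sqrt L} \<le> measure P (A1 \<union> A2 \<union> A3)"
      using sub A1s A2s A3s by (intro finite_measure_mono) auto
    also have "\<dots> \<le> measure P (A1 \<union> A2) + measure P A3"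
      using A1s A2s A3s by (intro measure_Un_le) auto
    also have "\<dots> \<le> measure P A1 + measure P A2 + measure P A3"
      using A1s A2s measure_Un_le[of A1 P A2] by simp
    also have "\<dots> \<le> 2 * exp (- (32 * L)) + 10 / (64 * N * L)"
      using b1 b2 b3 by simp
    also have "\<dots> \<le> real p powr (- 1)"
    proof -
      have e1: "exp (- L) = 1 / real p" unfolding L_def using p2 by (simp add: exp_minus inverse_eq_divide)
      have "exp (31 * L) \<ge> 1 + 31 * L" by (rule exp_ge_add_one_self)
      then have e31: "exp (31 * L) \<ge> 16" using L by linarith
      have "exp (- (32 * L)) = exp (- L) / exp (31 * L)" by (simp add: exp_diff[symmetric] exp_minus[symmetric])
      also have "\<dots> \<le> (1 / real p) / 16" unfolding e1 using e31 p2
        by (intro divide_left_mono) auto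
      finally have x1: "exp (- (32 * L)) \<le> 1 / (16 * real p)" by simp
      have x2: "10 / (64 * N * L) \<le> 10 / (64 * real p * (1 / 2))"
        using Npos L p2 by (intro divide_left_mono mult_mono) auto
      have "2 * exp (- (32 * L)) + 10 / (64 * N * L) \<le> 2 / (16 * real p) + 10 / (64 * real p * (1 / 2))"
        using x1 x2 by simp
      also have "\<dots> \<le> 1 / real p" using p2 by (simp add: field_simps)
      also have "\<dots> = real p powr (- 1)" using p2 by (simp add: powr_minus inverse_eq_divide)
      finally show ?thesis .
    qed
    finally show ?thesis unfolding P_def S_def m2eq L_def .
  qed
qed

theorem lemma3:
  "\<exists>C C1 :: real. C > 0 \<and> C1 > 0 \<and>
    (\<forall>(n::nat) (p::nat) (r::nat) (M :: nat \<Rightarrow> nat \<Rightarrow> nat \<Rightarrow> real).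
      p \<ge> 1 \<longrightarrow> r \<ge> 1 \<longrightarrow> (\<exists>i<n. frob_norm p r (M i) \<noteq> 0) \<longrightarrow>
      measure (gauss_mats n p r)
        {\<omega> \<in> space (gauss_mats n p r).
           \<bar>\<Sum>i<n. (frob_norm p r (Zmat \<omega> i))\<^sup>2 * frob_inner p r (Zmat \<omega> i) (M i)\<bar>
             \<ge> C * real p * real r * sqrt (\<Sum>i<n. (frob_norm p r (M i))\<^sup>2) * sqrt (ln (real p))}
      \<le> real p powr (- C1))"
proof -
  have "\<forall>(n::nat) (p::nat) (r::nat) (M :: nat \<Rightarrow> nat \<Rightarrow> nat \<Rightarrow> real).
      p \<ge> 1 \<longrightarrow> r \<ge> 1 \<longrightarrow> (\<exists>i<n. frob_norm p r (M i) \<noteq> 0) \<longrightarrow>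
      measure (gauss_mats n p r)
        {\<omega> \<in> space (gauss_mats n p r).
           \<bar>\<Sum>i<n. (frob_norm p r (Zmat \<omega> i))\<^sup>2 * frob_inner p r (Zmat \<omega> i) (M i)\<bar>
             \<ge> 16 * real p * real r * sqrt (\<Sum>i<n. (frob_norm p r (M i))\<^sup>2) * sqrt (ln (real p))}
      \<le> real p powr (- 1)"
    using main_bound by blast
  then show ?thesis by (intro exI[of _ "16::real"] exI[of _ "1::real"]) simp
qed

end
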